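(* For every integer $n\ge2$, if $T$ is a uniformly random standard Young tableau of shape $(n,n,n)$, then $T_{1,2}\in\{2,3,4\}$ and $$\mathbb E\big[x^{T_{1,2}}\big]=\frac{2(n-1)}{3n-1}\,x^2+\frac{8(n-1)(n+1)}{3(3n-1)(3n-2)}\,x^3+\frac{(n+1)(n+2)}{3(3n-1)(3n-2)}\,x^4 .$$
   Context: A standard Young tableau of shape $(n,n,n)$ is a bijective filling $T$ of the cells $[a,b]$ ($1\le a\le 3$, $1\le b\le n$; row $a$, column $b$) by $\{1,\dots,3n\}$ that increases along each row and down each column. $T_{a,b}$ denotes the entry in cell $[a,b]$. *)

theory Defs
  imports "HOL-Probability.Probability"
begin

definition cells3 :: "nat \<Rightarrow> (nat \<times> nat) set" where
  "cells3 n = {1..3} \<times> {1..n}"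

text \<open>Standard Young tableaux of shape (n,n,n), as functions on cells,
  extended by 0 outside the shape (so that the set of tableaux is finite).\<close>
definition SYT3 :: "nat \<Rightarrow> (nat \<times> nat \<Rightarrow> nat) set" where
  "SYT3 n = {T. bij_betw T (cells3 n) {1..3*n}
              \<and> (\<forall>c. c \<notin> cells3 n \<longrightarrow> T c = 0)
              \<and> (\<forall>a b. (a, b) \<in> cells3 n \<longrightarrow> (a, Suc b) \<in> cells3 n \<longrightarrow> T (a, b) < T (a, Suc b))
              \<and> (\<forall>a b. (a, b) \<in> cells3 n \<longrightarrow> (Suc a, b) \<in> cells3 n \<longrightarrow> T (a, b) < T (Suc a, b))}"

end

theory Submission
  imports Defs
begin


definition SYTon :: "(nat \<times> nat) set \<Rightarrow> (nat \<times> nat \<Rightarrow> nat) set" where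
  "SYTon D = {T. bij_betw T D {1..card D}
              \<and> (\<forall>c. c \<notin> D \<longrightarrow> T c = 0)
              \<and> (\<forall>a b. (a, b) \<in> D \<longrightarrow> (a, Suc b) \<in> D \<longrightarrow> T (a, b) < T (a, Suc b))
              \<and> (\<forall>a b. (a, b) \<in> D \<longrightarrow> (Suc a, b) \<in> D \<longrightarrow> T (a, b) < T (Suc a, b))}"

definition isMin :: "(nat \<times> nat) set \<Rightarrow> nat \<times> nat \<Rightarrow> bool" where
  "isMin D c \<longleftrightarrow> c \<in> D \<and> (\<forall>a b. c = (a, Suc b) \<longrightarrow> (a,b) \<notin> D) \<and> (\<forall>a b. c = (Suc a, b) \<longrightarrow> (a,b) \<notin> D)"

definition ext :: "nat \<times> nat \<Rightarrow> (nat \<times> nat \<Rightarrow> nat) \<Rightarrow> (nat \<times> nat \<Rightarrow> nat)" where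
  "ext c T = (\<lambda>d. if d = c then 1 else if T d = 0 then 0 else Suc (T d))"

definition shr :: "nat \<times> nat \<Rightarrow> (nat \<times> nat \<Rightarrow> nat) \<Rightarrow> (nat \<times> nat \<Rightarrow> nat)" where
  "shr c T = (\<lambda>d. if d = c then 0 else T d - 1)"

lemma SYTon_finite:
  assumes "finite D" shows "finite (SYTon D)"
proof -
  have "SYTon D \<subseteq> {f. \<forall>x. (x \<in> D \<longrightarrow> f x \<in> {0..card D}) \<and> (x \<notin> D \<longrightarrow> f x = 0)}"
    by (auto simp: SYTon_def bij_betw_def)
  then show ?thesis using finite_set_of_finite_funs[OF assms, of "{0..card D}" 0]
    by (metis (no_types, lifting) finite_atLeastAtMost finite_subset)
qed

lemma SYTon_zero: "T \<in> SYTon D \<Longrightarrow> c \<notin> D \<Longrightarrow> T c = 0"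
  by (cases c) (simp add: SYTon_def)

lemma SYTon_pos: "T \<in> SYTon D \<Longrightarrow> d \<in> D \<Longrightarrow> T d \<ge> 1 \<and> T d \<le> card D"
  by (auto simp: SYTon_def bij_betw_def)

lemma ext_mem:
  assumes fin: "finite D" and m: "isMin D c" and T: "T \<in> SYTon (D - {c})"
  shows "ext c T \<in> SYTon D"
proof -
  let ?D' = "D - {c}"
  have cD: "c \<in> D" using m by (simp add: isMin_def)
  have cardD: "card D = Suc (card ?D')" using fin cD
    by (metis card_Suc_Diff1)
  have bT: "bij_betw T ?D' {1..card ?D'}" and z: "\<And>d. d \<notin> ?D' \<Longrightarrow> T d = 0"
    and r: "\<And>a b. (a, b) \<in> ?D' \<Longrightarrow> (a, Suc b) \<in> ?D' \<Longrightarrow> T (a, b) < T (a, Suc b)"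
    and co: "\<And>a b. (a, b) \<in> ?D' \<Longrightarrow> (Suc a, b) \<in> ?D' \<Longrightarrow> T (a, b) < T (Suc a, b)"
    using T by (auto simp: SYTon_def)
  have pos: "\<And>d. d \<in> ?D' \<Longrightarrow> T d \<ge> 1" using SYTon_pos[OF T] by blast
  have eqD: "\<And>d. d \<in> ?D' \<Longrightarrow> ext c T d = Suc (T d)"
  proof -
    fix d assume d: "d \<in> ?D'" then have "T d \<noteq> 0" using pos[OF d] by simp
    then show "ext c T d = Suc (T d)" using d by (simp add: ext_def)
  qed
  have e1: "ext c T c = 1" by (simp add: ext_def)
  have inj: "inj_on (ext c T) D"
  proof (rule inj_onI)
    fix d1 d2 assume d: "d1 \<in> D" "d2 \<in> D" "ext c T d1 = ext c T d2"
    show "d1 = d2"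
    proof (cases "d1 = c \<or> d2 = c")
      case True
      show ?thesis
      proof (cases "d1 = c")
        case True then show ?thesis using d eqD[of d2] pos[of d2] e1 by (cases "d2 = c") auto
      next
        case False then show ?thesis using \<open>d1 = c \<or> d2 = c\<close> d eqD[of d1] pos[of d1] e1 by auto
      qed
    next
      case False
      then have "T d1 = T d2" using d eqD[of d1] eqD[of d2] by auto
      then show ?thesis using False d bT by (auto simp: bij_betw_def inj_on_def)
    qed
  qed
  have img: "ext c T ` D = {1..card D}"
  proof
    show "ext c T ` D \<subseteq> {1..card D}"
    proof
      fix y assume "y \<in> ext c T ` D"
      then obtain d where d: "d \<in> D" "y = ext c T d" by auto
      show "y \<in> {1..card D}"
      proof (cases "d = c")
        case True then show ?thesis using d e1 cardD by simp
      next
        case False then show ?thesis using d eqD[of d] SYTon_pos[OF T, of d] cardD by simp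
      qed
    qed
  next
    show "{1..card D} \<subseteq> ext c T ` D"
    proof
      fix k assume k: "k \<in> {1..card D}"
      show "k \<in> ext c T ` D"
      proof (cases "k = 1")
        case True then show ?thesis using cD e1 by (intro image_eqI[of _ _ c]) auto
      next
        case False
        then have "k - 1 \<in> {1..card ?D'}" using k cardD by auto
        then have "k - 1 \<in> T ` ?D'" using bT by (simp add: bij_betw_def)
        then obtain d where "d \<in> ?D'" "T d = k - 1" by (metis imageE)
        then show ?thesis using eqD False k by (intro image_eqI[of _ _ d]) auto
      qed
    qed
  qed
  show ?thesis unfolding SYTon_def
  proof (intro CollectI conjI allI impI)
    show "bij_betw (ext c T) D {1..card D}" using inj img by (simp add: bij_betw_def)
  next
    fix d assume "d \<notin> D" then show "ext c T d = 0" using z cD by (auto simp: ext_def)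
  next
    fix a b assume ab: "(a, b) \<in> D" "(a, Suc b) \<in> D"
    show "ext c T (a, b) < ext c T (a, Suc b)"
    proof (cases "(a,b) = c")
      case True then show ?thesis using ab eqD[of "(a, Suc b)"] pos[of "(a, Suc b)"] e1 by auto
    next
      case False
      have "(a, Suc b) \<noteq> c" using m ab by (auto simp: isMin_def)
      then show ?thesis using False ab eqD[of "(a,b)"] eqD[of "(a, Suc b)"] r[of a b] by auto
    qed
  next
    fix a b assume ab: "(a, b) \<in> D" "(Suc a, b) \<in> D"
    show "ext c T (a, b) < ext c T (Suc a, b)"
    proof (cases "(a,b) = c")
      case True then show ?thesis using ab eqD[of "(Suc a, b)"] pos[of "(Suc a, b)"] e1 by auto
    next
      case False
      have "(Suc a, b) \<noteq> c" using m ab by (auto simp: isMin_def)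
      then show ?thesis using False ab eqD[of "(a,b)"] eqD[of "(Suc a, b)"] co[of a b] by auto
    qed
  qed
qed

lemma shr_mem:
  assumes fin: "finite D" and T: "T \<in> SYTon D" and cD: "c \<in> D" and T1: "T c = 1"
  shows "shr c T \<in> SYTon (D - {c})" "ext c (shr c T) = T" "isMin D c"
proof -
  let ?D' = "D - {c}"
  have cardD: "card D = Suc (card ?D')" using fin cD
    by (metis card_Suc_Diff1)
  have bT: "bij_betw T D {1..card D}" and z: "\<And>d. d \<notin> D \<Longrightarrow> T d = 0"
    and r: "\<And>a b. (a, b) \<in> D \<Longrightarrow> (a, Suc b) \<in> D \<Longrightarrow> T (a, b) < T (a, Suc b)"
    and co: "\<And>a b. (a, b) \<in> D \<Longrightarrow> (Suc a, b) \<in> D \<Longrightarrow> T (a, b) < T (Suc a, b)"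
    using T SYTon_zero[OF T] unfolding SYTon_def by auto
  have ne1: "\<And>d. d \<in> ?D' \<Longrightarrow> T d \<ge> 2 \<and> T d \<le> card D"
  proof -
    fix d assume d: "d \<in> ?D'"
    have "T d \<ge> 1 \<and> T d \<le> card D" using SYTon_pos[OF T] d by auto
    moreover have "T d \<noteq> T c" using bT d cD by (auto simp: bij_betw_def inj_on_def)
    ultimately show "T d \<ge> 2 \<and> T d \<le> card D" using T1 by auto
  qed
  have sD: "\<And>d. d \<in> ?D' \<Longrightarrow> shr c T d = T d - 1" by (simp add: shr_def)
  have injs: "inj_on (shr c T) ?D'"
  proof (rule inj_onI)
    fix d1 d2 assume d: "d1 \<in> ?D'" "d2 \<in> ?D'" "shr c T d1 = shr c T d2"
    then have "T d1 - 1 = T d2 - 1" using sD[of d1] sD[of d2] by simp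
    then have "T d1 = T d2" using ne1[of d1] ne1[of d2] d by linarith
    then show "d1 = d2" using d bT by (auto simp: bij_betw_def inj_on_def)
  qed
  have imgs: "shr c T ` ?D' = {1..card ?D'}"
  proof
    show "shr c T ` ?D' \<subseteq> {1..card ?D'}"
    proof
      fix y assume "y \<in> shr c T ` ?D'"
      then obtain d where d: "d \<in> ?D'" "y = shr c T d" by blast
      have "T d \<ge> 2" "T d \<le> Suc (card ?D')" using ne1[of d] d cardD by auto
      then show "y \<in> {1..card ?D'}" using sD[of d] d by auto
    qed
  next
    show "{1..card ?D'} \<subseteq> shr c T ` ?D'"
    proof
      fix k assume k: "k \<in> {1..card ?D'}"
      then have "Suc k \<in> {1..card D}" using cardD by auto
      then have "Suc k \<in> T ` D" using bT by (simp add: bij_betw_def)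
      then obtain d where d: "d \<in> D" "T d = Suc k" by (metis imageE)
      then have "d \<noteq> c" using T1 k by auto
      then show "k \<in> shr c T ` ?D'" using d sD[of d] by (intro image_eqI[of _ _ d]) auto
    qed
  qed
  show "shr c T \<in> SYTon ?D'" unfolding SYTon_def
  proof (intro CollectI conjI allI impI)
    show "bij_betw (shr c T) ?D' {1..card ?D'}" using injs imgs by (simp add: bij_betw_def)
  next
    fix d assume d: "d \<notin> ?D'"
    show "shr c T d = 0"
    proof (cases "d = c")
      case True then show ?thesis by (simp add: shr_def)
    next
      case False then have "T d = 0" using z d by simp
      then show ?thesis by (simp add: shr_def)
    qed
  next
    fix a b assume ab: "(a, b) \<in> ?D'" "(a, Suc b) \<in> ?D'"
    have "T (a,b) < T (a,Suc b)" "2 \<le> T (a,b)" "shr c T (a, b) = T (a,b) - 1" "shr c T (a, Suc b) = T (a,Suc b) - 1"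
      using ab r[of a b] ne1[of "(a,b)"] sD[of "(a,b)"] sD[of "(a,Suc b)"] by auto
    then show "shr c T (a, b) < shr c T (a, Suc b)" by linarith
  next
    fix a b assume ab: "(a, b) \<in> ?D'" "(Suc a, b) \<in> ?D'"
    have "T (a,b) < T (Suc a,b)" "2 \<le> T (a,b)" "shr c T (a, b) = T (a,b) - 1" "shr c T (Suc a, b) = T (Suc a,b) - 1"
      using ab co[of a b] ne1[of "(a,b)"] sD[of "(a,b)"] sD[of "(Suc a,b)"] by auto
    then show "shr c T (a, b) < shr c T (Suc a, b)" by linarith
  qed
  show "ext c (shr c T) = T"
  proof
    fix d show "ext c (shr c T) d = T d"
    proof (cases "d \<in> ?D'")
      case True
      then have "shr c T d \<noteq> 0" using ne1[OF True] sD[OF True] by simp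
      then show ?thesis using True ne1[OF True] sD[OF True] unfolding ext_def by simp
    next
      case False
      show ?thesis
      proof (cases "d = c")
        case True then show ?thesis using T1 by (simp add: ext_def)
      next
        case False
        then have "T d = 0" using z \<open>d \<notin> ?D'\<close> by simp
        then show ?thesis using False by (simp add: ext_def shr_def)
      qed
    qed
  qed
  show "isMin D c" unfolding isMin_def
  proof (intro conjI allI impI)
    show "c \<in> D" by (rule cD)
  next
    fix a b assume e: "c = (a, Suc b)"
    show "(a, b) \<notin> D"
    proof
      assume ab: "(a,b) \<in> D"
      have "(a, Suc b) \<in> D" using cD e by simp
      then have "T (a,b) < T (a,Suc b)" using r ab by blast
      moreover have "T (a,Suc b) = 1" using T1 e by simp
      moreover have "T (a,b) \<ge> 1" using SYTon_pos[OF T ab] by simp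
      ultimately show False by simp
    qed
  next
    fix a b assume e: "c = (Suc a, b)"
    show "(a, b) \<notin> D"
    proof
      assume ab: "(a,b) \<in> D"
      have "(Suc a, b) \<in> D" using cD e by simp
      then have "T (a,b) < T (Suc a, b)" using co ab by blast
      moreover have "T (Suc a, b) = 1" using T1 e by simp
      moreover have "T (a,b) \<ge> 1" using SYTon_pos[OF T ab] by simp
      ultimately show False by simp
    qed
  qed
qed

lemma SYTon_has1:
  assumes "T \<in> SYTon D" "finite D" "D \<noteq> {}" shows "\<exists>c\<in>D. T c = 1"
proof -
  have "card D \<ge> 1" using assms by (simp add: Suc_le_eq card_gt_0_iff)
  then have "1 \<in> T ` D" using assms(1) by (auto simp: SYTon_def bij_betw_def)
  then show ?thesis by force
qed

lemma SYTon_split: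
  assumes "finite D" "D \<noteq> {}"
  shows "SYTon D = (\<Union>c\<in>{c. isMin D c}. ext c ` SYTon (D - {c}))"
proof
  show "SYTon D \<subseteq> (\<Union>c\<in>{c. isMin D c}. ext c ` SYTon (D - {c}))"
  proof
    fix T assume T: "T \<in> SYTon D"
    then obtain c where c: "c \<in> D" "T c = 1" using SYTon_has1 assms by blast
    then show "T \<in> (\<Union>c\<in>{c. isMin D c}. ext c ` SYTon (D - {c}))"
      using shr_mem[OF assms(1) T c] by (metis (mono_tags, lifting) UN_iff image_eqI mem_Collect_eq)
  qed
next
  show "(\<Union>c\<in>{c. isMin D c}. ext c ` SYTon (D - {c})) \<subseteq> SYTon D"
    using ext_mem[OF assms(1)] by blast
qed

lemma ext_inj: "inj_on (ext c) (SYTon (D - {c}))"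
proof (rule inj_onI)
  fix T1 T2 assume T: "T1 \<in> SYTon (D - {c})" "T2 \<in> SYTon (D - {c})" "ext c T1 = ext c T2"
  show "T1 = T2"
  proof
    fix d
    have "ext c T1 d = ext c T2 d" using T by simp
    moreover have "T1 c = 0" "T2 c = 0" using T SYTon_zero[of _ "D - {c}" c] by auto
    ultimately show "T1 d = T2 d"
      by (cases "d = c"; cases "T1 d = 0"; cases "T2 d = 0") (simp_all add: ext_def)
  qed
qed

lemma SYTon_sum:
  assumes "finite D" "D \<noteq> {}"
  shows "sum g (SYTon D) = (\<Sum>c\<in>{c. isMin D c}. \<Sum>T\<in>SYTon (D - {c}). g (ext c T))"
proof -
  have fm: "finite {c. isMin D c}" using assms(1) by (rule finite_subset[rotated]) (auto simp: isMin_def)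
  have "sum g (SYTon D) = (\<Sum>c\<in>{c. isMin D c}. sum g (ext c ` SYTon (D - {c})))"
    unfolding SYTon_split[OF assms]
  proof (rule sum.UNION_disjoint[OF fm])
    show "\<forall>c\<in>{c. isMin D c}. finite (ext c ` SYTon (D - {c}))"
      using SYTon_finite assms(1) by auto
    show "\<forall>c1\<in>{c. isMin D c}. \<forall>c2\<in>{c. isMin D c}. c1 \<noteq> c2 \<longrightarrow> ext c1 ` SYTon (D - {c1}) \<inter> ext c2 ` SYTon (D - {c2}) = {}"
    proof (intro ballI impI)
      fix c1 c2 :: "nat \<times> nat" assume "c1 \<noteq> c2"
      have "\<And>T1 T2. ext c1 T1 \<noteq> ext c2 T2"
      proof
        fix T1 T2 assume "ext c1 T1 = ext c2 T2"
        then have "ext c1 T1 c1 = ext c2 T2 c1" by simp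
        moreover have "ext c1 T1 c1 = 1" by (simp add: ext_def)
        moreover have "ext c2 T2 c1 \<noteq> 1" using \<open>c1 \<noteq> c2\<close> by (simp add: ext_def)
        ultimately show False by simp
      qed
      then show "ext c1 ` SYTon (D - {c1}) \<inter> ext c2 ` SYTon (D - {c2}) = {}" by auto
    qed
  qed
  also have "\<dots> = (\<Sum>c\<in>{c. isMin D c}. \<Sum>T\<in>SYTon (D - {c}). g (ext c T))"
    by (rule sum.cong[OF refl]) (simp add: sum.reindex[OF ext_inj])
  finally show ?thesis .
qed

lemma SYTon_empty: "SYTon {} = {\<lambda>_. 0}"
  by (auto simp: SYTon_def bij_betw_def)



definition Nf :: "nat \<Rightarrow> nat \<Rightarrow> nat \<Rightarrow> real" where
  "Nf a b c = fact (a+b+c) * ((real a - real b + 1) * (real a - real c + 2) * (real b - real c + 1))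
     / (fact (a+2) * fact (b+1) * fact c)"

lemma Nf_pos: "c \<le> b \<Longrightarrow> b \<le> a \<Longrightarrow> Nf a b c > 0"
  unfolding Nf_def by (intro divide_pos_pos mult_pos_pos) auto

lemma gB: "(Y::real) = y*Z \<Longrightarrow> y \<noteq> 0 \<Longrightarrow> Q' = Q \<Longrightarrow> F*Q'/(A*B*Z) = F/(A*B*Y)*y*Q"
  by (cases "A*B*Z = 0") (auto simp: field_simps)
lemma gC: "(Y::real) = y*Z \<Longrightarrow> y \<noteq> 0 \<Longrightarrow> Q' = Q \<Longrightarrow> F*Q'/(A*Z*G) = F/(A*Y*G)*y*Q"
  by (cases "A*Z*G = 0") (auto simp: field_simps)
lemma gD: "(Y::real) = y*Z \<Longrightarrow> y \<noteq> 0 \<Longrightarrow> Q' = Q \<Longrightarrow> F*Q'/(Z*B*G) = F/(Y*B*G)*y*Q"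
  by (cases "Z*B*G = 0") (auto simp: field_simps)
lemma gA: "(F'::real) = y*F \<Longrightarrow> F'*P/Den = F/Den*y*P"
  by (simp add: field_simps)

lemma Pgen: "\<And>x y z::real. (x+y+z) * ((x - y + 1) * (x - z + 2) * (y - z + 1))
     = z * ((x - y + 1) * (x - z + 3) * (y - z + 2)) + (y + 1) * ((x - y + 2) * (x - z + 2) * (y - z))
       + (x + 2) * ((x - y) * (x - z + 1) * (y - z + 1))"
    by (simp add: algebra_simps)

lemma Nf_rec:
  assumes "c \<le> b" "b \<le> a" "0 < a+b+c"
  shows "Nf a b c = (if 0<c then Nf a b (c-1) else 0) + (if c<b then Nf a (b-1) c else 0)
                   + (if b<a then Nf (a-1) b c else 0)"
proof -
  obtain s where s: "a+b+c = Suc s" using assms(3) by (cases "a+b+c") auto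
  define K where "K = fact s / (fact (a+2) * fact (b+1) * fact c :: real)"
  have A: "Nf a b c = K * (real s + 1) * ((real a - real b + 1) * (real a - real c + 2) * (real b - real c + 1))"
    unfolding Nf_def K_def s by (rule gA) (simp add: fact_Suc)
  have B: "(if 0<c then Nf a b (c-1) else 0) = K * real c * ((real a - real b + 1) * (real a - real c + 3) * (real b - real c + 2))"
  proof (cases c)
    case 0 then show ?thesis by simp
  next
    case (Suc c')
    then have s': "a+b+c' = s" using s by simp
    have "Nf a b c' = K * real c * ((real a - real b + 1) * (real a - real c + 3) * (real b - real c + 2))"
      unfolding Nf_def K_def s' by (rule gB) (use Suc in \<open>simp_all add: algebra_simps\<close>)
    then show ?thesis using Suc by simp
  qed
  have C: "(if c<b then Nf a (b-1) c else 0) = K * (real b + 1) * ((real a - real b + 2) * (real a - real c + 2) * (real b - real c))"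
  proof (cases "c < b")
    case False then show ?thesis using assms by simp
  next
    case True
    then obtain b' where b: "b = Suc b'" by (cases b) auto
    then have s': "a+b'+c = s" using s by simp
    have "Nf a b' c = K * (real b + 1) * ((real a - real b + 2) * (real a - real c + 2) * (real b - real c))"
      unfolding Nf_def K_def s' by (rule gC) (use b in \<open>simp_all add: algebra_simps\<close>)
    then show ?thesis using True b by simp
  qed
  have D: "(if b<a then Nf (a-1) b c else 0) = K * (real a + 2) * ((real a - real b) * (real a - real c + 1) * (real b - real c + 1))"
  proof (cases "b < a")
    case False then show ?thesis using assms by simp
  next
    case True
    then obtain a' where a: "a = Suc a'" by (cases a) auto
    then have s': "a'+b+c = s" using s by simp
    have "Nf a' b c = K * (real a + 2) * ((real a - real b) * (real a - real c + 1) * (real b - real c + 1))"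
      unfolding Nf_def K_def s' by (rule gD) (use a in \<open>simp_all add: algebra_simps\<close>)
    then show ?thesis using True a by simp
  qed
  have "real (a+b+c) = real (Suc s)" using s by (simp only:)
  then have rs: "real s + 1 = real a + real b + real c" by simp
  have E: "K * (real s + 1) * ((real a - real b + 1) * (real a - real c + 2) * (real b - real c + 1))
     = K * real c * ((real a - real b + 1) * (real a - real c + 3) * (real b - real c + 2)) + K * (real b + 1) * ((real a - real b + 2) * (real a - real c + 2) * (real b - real c))
       + K * (real a + 2) * ((real a - real b) * (real a - real c + 1) * (real b - real c + 1))"
  proof -
    have E0: "K * ((real a + real b + real c) * ((real a - real b + 1) * (real a - real c + 2) * (real b - real c + 1)))
     = K * (real c * ((real a - real b + 1) * (real a - real c + 3) * (real b - real c + 2))) + K * ((real b + 1) * ((real a - real b + 2) * (real a - real c + 2) * (real b - real c)))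
       + K * ((real a + 2) * ((real a - real b) * (real a - real c + 1) * (real b - real c + 1)))"
      using arg_cong[where f="\<lambda>t. K*t", OF Pgen[of "real a" "real b" "real c"]]
      by (simp only: distrib_left[of K])
    show ?thesis unfolding rs using E0 by (simp only: mult.assoc)
  qed
  show ?thesis using A B C D E by linarith
qed



definition Dsk :: "nat \<Rightarrow> nat \<Rightarrow> nat \<Rightarrow> nat \<Rightarrow> (nat \<times> nat) set" where
  "Dsk n p q r = {(a,b). (a = 1 \<and> p < b \<and> b \<le> n) \<or> (a = 2 \<and> q < b \<and> b \<le> n) \<or> (a = 3 \<and> r < b \<and> b \<le> n)}"

lemma Dsk_finite: "finite (Dsk n p q r)"
proof -
  have "Dsk n p q r \<subseteq> {1..3} \<times> {0..n}" by (auto simp: Dsk_def)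
  then show ?thesis by (rule finite_subset) simp
qed

lemma Dsk_min:
  assumes "r \<le> q" "q \<le> p" "p \<le> n"
  shows "{c. isMin (Dsk n p q r) c} = (if p < n then {(1::nat, Suc p)} else {}) \<union> (if q < p then {(2, Suc q)} else {})
           \<union> (if r < q then {(3, Suc r)} else {})"
proof (intro set_eqI iffI)
  fix c assume "c \<in> {c. isMin (Dsk n p q r) c}"
  then have m: "isMin (Dsk n p q r) c" by simp
  obtain a b where c: "c = (a, b)" by (cases c)
  have inD: "(a,b) \<in> Dsk n p q r" using m c by (simp add: isMin_def)
  then have b0: "b \<noteq> 0" by (auto simp: Dsk_def)
  then obtain b' where b: "b = Suc b'" by (cases b) auto
  have left: "(a, b') \<notin> Dsk n p q r" using m c b by (simp add: isMin_def)
  show "c \<in> (if p < n then {(1, Suc p)} else {}) \<union> (if q < p then {(2, Suc q)} else {})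
           \<union> (if r < q then {(3, Suc r)} else {})"
  proof -
    consider "a = 1" | "a = 2" | "a = 3" using inD by (auto simp: Dsk_def)
    then show ?thesis
    proof cases
      case 1 then show ?thesis using inD left b c by (auto simp: Dsk_def)
    next
      case 2
      have up: "(1, b) \<notin> Dsk n p q r" using m c 2 by (simp add: isMin_def)
      then show ?thesis using 2 inD left up b c by (auto simp: Dsk_def)
    next
      case 3
      have up: "(2, b) \<notin> Dsk n p q r" using m c 3 by (simp add: isMin_def numeral_2_eq_2)
      then show ?thesis using 3 inD left up b c by (auto simp: Dsk_def)
    qed
  qed
next
  fix c :: "nat \<times> nat" assume c: "c \<in> (if p < n then {(1, Suc p)} else {}) \<union> (if q < p then {(2, Suc q)} else {})
           \<union> (if r < q then {(3, Suc r)} else {})"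
  show "c \<in> {c. isMin (Dsk n p q r) c}"
    using c assms by (auto simp: isMin_def Dsk_def numeral_2_eq_2 numeral_3_eq_3 split: if_splits)
qed

lemma Dsk_rm1: "p < n \<Longrightarrow> Dsk n p q r - {(1, Suc p)} = Dsk n (Suc p) q r"
  by (auto simp: Dsk_def)
lemma Dsk_rm2: "Dsk n p q r - {(2, Suc q)} = Dsk n p (Suc q) r"
  by (auto simp: Dsk_def)
lemma Dsk_rm3: "Dsk n p q r - {(3, Suc r)} = Dsk n p q (Suc r)"
  by (auto simp: Dsk_def)

lemma sum3:
  assumes "x \<noteq> y" "x \<noteq> z" "y \<noteq> z"
  shows "sum f ((if P then {x} else {}) \<union> (if Q then {y} else {}) \<union> (if R then {z} else {}))
     = (if P then f x else 0) + (if Q then f y else 0) + (if R then f z else 0)"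
  using assms by (cases P; cases Q; cases R) (auto simp: add_ac)

lemma count_aux:
  "\<forall>p q r. r \<le> q \<longrightarrow> q \<le> p \<longrightarrow> p \<le> n \<longrightarrow> (n-p)+(n-q)+(n-r) = k \<longrightarrow>
     real (card (SYTon (Dsk n p q r))) = Nf (n-r) (n-q) (n-p)"
proof (induction k)
  case 0
  show ?case
  proof (intro allI impI)
    fix p q r :: nat assume h: "r \<le> q" "q \<le> p" "p \<le> n" "(n-p)+(n-q)+(n-r) = 0"
    then have "p = n" "q = n" "r = n" by auto
    then have "Dsk n p q r = {}" by (auto simp: Dsk_def)
    then show "real (card (SYTon (Dsk n p q r))) = Nf (n-r) (n-q) (n-p)"
      using \<open>p = n\<close> \<open>q = n\<close> \<open>r = n\<close> by (simp add: SYTon_empty Nf_def)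
  qed
next
  case (Suc k)
  show ?case
  proof (intro allI impI)
    fix p q r :: nat assume h: "r \<le> q" "q \<le> p" "p \<le> n" "(n-p)+(n-q)+(n-r) = Suc k"
    let ?D = "Dsk n p q r"
    have rn: "r < n" using h by auto
    then have ne: "?D \<noteq> {}" by (auto simp: Dsk_def intro!: exI[of _ "(3, n)"])
    have S: "card (SYTon ?D) = (\<Sum>c\<in>{c. isMin ?D c}. card (SYTon (?D - {c})))"
      using SYTon_sum[OF Dsk_finite ne, of "\<lambda>_. 1::nat"] by simp
    have S2: "real (card (SYTon ?D)) = (if p < n then real (card (SYTon (Dsk n (Suc p) q r))) else 0)
       + (if q < p then real (card (SYTon (Dsk n p (Suc q) r))) else 0)
       + (if r < q then real (card (SYTon (Dsk n p q (Suc r)))) else 0)"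
    proof -
      have e1: "p < n \<Longrightarrow> ?D - {(Suc 0, Suc p)} = Dsk n (Suc p) q r"
        using Dsk_rm1[of p n q r] by simp
      show ?thesis unfolding S Dsk_min[OF h(1-3)]
        by (subst sum3) (auto simp: e1 Dsk_rm2 Dsk_rm3)
    qed
    have I1: "(if p < n then real (card (SYTon (Dsk n (Suc p) q r))) else 0)
        = (if 0 < n - p then Nf (n-r) (n-q) (n-p-1) else 0)"
    proof (cases "p < n")
      case True
      then have "real (card (SYTon (Dsk n (Suc p) q r))) = Nf (n-r) (n-q) (n - Suc p)"
      proof -
        have k1: "(n - Suc p)+(n-q)+(n-r) = k" using h True by arith
        show ?thesis by (rule Suc.IH[rule_format, OF _ _ _ k1]) (use h True in auto)
      qed
      then show ?thesis using True h by simp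
    qed (use h in simp)
    have I2: "(if q < p then real (card (SYTon (Dsk n p (Suc q) r))) else 0)
        = (if n - p < n - q then Nf (n-r) (n-q-1) (n-p) else 0)"
    proof (cases "q < p")
      case True
      then have "real (card (SYTon (Dsk n p (Suc q) r))) = Nf (n-r) (n - Suc q) (n-p)"
      proof -
        have k1: "(n - p)+(n - Suc q)+(n-r) = k" using h True by arith
        show ?thesis by (rule Suc.IH[rule_format, OF _ _ _ k1]) (use h True in auto)
      qed
      then show ?thesis using True h by simp
    qed (use h in simp)
    have I3: "(if r < q then real (card (SYTon (Dsk n p q (Suc r)))) else 0)
        = (if n - q < n - r then Nf (n-r-1) (n-q) (n-p) else 0)"
    proof (cases "r < q")
      case True
      then have "real (card (SYTon (Dsk n p q (Suc r)))) = Nf (n - Suc r) (n - q) (n-p)"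
      proof -
        have k1: "(n - p)+(n - q)+(n - Suc r) = k" using h True by arith
        show ?thesis by (rule Suc.IH[rule_format, OF _ _ _ k1]) (use h True in auto)
      qed
      then show ?thesis using True h by simp
    qed (use h in simp)
    have R: "Nf (n-r) (n-q) (n-p) = (if 0 < n - p then Nf (n-r) (n-q) (n-p-1) else 0)
       + (if n - p < n - q then Nf (n-r) (n-q-1) (n-p) else 0)
       + (if n - q < n - r then Nf (n-r-1) (n-q) (n-p) else 0)"
      by (rule Nf_rec) (use h in auto)
    show "real (card (SYTon ?D)) = Nf (n-r) (n-q) (n-p)"
      unfolding S2 I1 I2 I3 R ..
  qed
qed

lemma count:
  "r \<le> q \<Longrightarrow> q \<le> p \<Longrightarrow> p \<le> n \<Longrightarrow> real (card (SYTon (Dsk n p q r))) = Nf (n-r) (n-q) (n-p)"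
  using count_aux by blast



lemma R1: "(3 * real m + 5) * Nf (Suc (Suc m)) (Suc (Suc m)) m = 2 * (real m + 1) * Nf (Suc (Suc m)) (Suc (Suc m)) (Suc (Suc m))"
  unfolding Nf_def
  apply (simp add: fact_Suc del: of_nat_Suc)
  apply (simp add: field_simps del: of_nat_Suc)
  apply (simp add: algebra_simps)
  done

lemma R2: "3 * (3 * real m + 5) * (3 * real m + 4) * Nf (Suc (Suc m)) (Suc m) m = 8 * (real m + 1) * (real m + 3) * Nf (Suc (Suc m)) (Suc (Suc m)) (Suc (Suc m))"
  unfolding Nf_def
  apply (simp add: fact_Suc del: of_nat_Suc)
  apply (simp add: field_simps del: of_nat_Suc)
  apply (simp add: algebra_simps)
  done

lemma R3: "3 * (3 * real m + 5) * (3 * real m + 4) * Nf (Suc m) (Suc m) m = (real m + 3) * (real m + 4) * Nf (Suc (Suc m)) (Suc (Suc m)) (Suc (Suc m))"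
  unfolding Nf_def
  apply (simp add: fact_Suc del: of_nat_Suc)
  apply (simp add: field_simps del: of_nat_Suc)
  apply (simp add: algebra_simps)
  done


lemma cells_Dsk: "cells3 n = Dsk n 0 0 0"
  by (auto simp: cells3_def Dsk_def)

lemma SYT3_eq: "SYT3 n = SYTon (cells3 n)"
proof -
  have "card (cells3 n) = 3 * n" by (simp add: cells3_def card_cartesian_product)
  then show ?thesis unfolding SYT3_def SYTon_def by simp
qed

lemma Gstep:
  fixes x :: real
  assumes "finite D" "D \<noteq> {}" "(1,2) \<in> D"
  shows "(\<Sum>T\<in>SYTon D. x ^ T (1,2)) = (\<Sum>c\<in>{c. isMin D c}.
      (if c = (1,2) then x * real (card (SYTon (D - {c}))) else x * (\<Sum>T\<in>SYTon (D - {c}). x ^ T (1,2))))"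
  unfolding SYTon_sum[OF assms(1,2)]
proof (rule sum.cong[OF refl])
  fix c assume "c \<in> {c. isMin D c}"
  show "(\<Sum>T\<in>SYTon (D - {c}). x ^ ext c T (1, 2)) =
      (if c = (1,2) then x * real (card (SYTon (D - {c}))) else x * (\<Sum>T\<in>SYTon (D - {c}). x ^ T (1,2)))"
  proof (cases "c = (1,2)")
    case True
    then have "\<And>T. ext c T (1,2) = 1" by (simp add: ext_def)
    then show ?thesis using True by simp
  next
    case False
    have "\<And>T. T \<in> SYTon (D - {c}) \<Longrightarrow> x ^ ext c T (1, 2) = x * x ^ T (1,2)"
    proof -
      fix T assume T: "T \<in> SYTon (D - {c})"
      have "T (1,2) \<ge> 1" using SYTon_pos[OF T, of "(1,2)"] assms(3) False by auto
      then have "ext c T (1,2) = Suc (T (1,2))" using False by (simp add: ext_def)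
      then show "x ^ ext c T (1, 2) = x * x ^ T (1,2)" by simp
    qed
    then show ?thesis using False by (simp add: sum_distrib_left)
  qed
qed

lemma Vstep:
  assumes "finite D" "D \<noteq> {}" "(1,2) \<in> D" "T \<in> SYTon D"
  shows "\<exists>c. isMin D c \<and> ((c = (1,2) \<and> T (1,2) = 1) \<or> (c \<noteq> (1,2) \<and> (\<exists>T'\<in>SYTon (D - {c}). T (1,2) = Suc (T' (1,2)))))"
proof -
  obtain c T' where c: "isMin D c" "T' \<in> SYTon (D - {c})" "T = ext c T'"
    using assms(4) SYTon_split[OF assms(1,2)] by blast
  show ?thesis
  proof (cases "c = (1,2)")
    case True then show ?thesis using c by (auto simp: ext_def)
  next
    case False
    have "T' (1,2) \<ge> 1" using SYTon_pos[OF c(2), of "(1,2)"] assms(3) False by auto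
    then have "T (1,2) = Suc (T' (1,2))" using c False by (simp add: ext_def)
    then show ?thesis using c False by blast
  qed
qed

lemma solve: "(A::real) \<noteq> 0 \<Longrightarrow> A * y = B * z \<Longrightarrow> y = B / A * z"
  by (simp add: field_simps)

lemma gsum: "(N::real) \<noteq> 0 \<Longrightarrow> (a * (r1 * N) + b * (r2 * N) + c * (r3 * N)) / N = r1 * a + r2 * b + r3 * c"
  by (simp add: field_simps)

theorem mainTheorem8:
  fixes n :: nat and x :: real
  assumes "n \<ge> 2"
  shows "(\<forall>T \<in> SYT3 n. T (1, 2) \<in> {2, 3, 4})
    \<and> measure_pmf.expectation (pmf_of_set (SYT3 n)) (\<lambda>T. x ^ T (1, 2))
      = 2 * (real n - 1) / (3 * real n - 1) * x ^ 2
        + 8 * (real n - 1) * (real n + 1) / (3 * (3 * real n - 1) * (3 * real n - 2)) * x ^ 3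
        + (real n + 1) * (real n + 2) / (3 * (3 * real n - 1) * (3 * real n - 2)) * x ^ 4"
proof -
  obtain m where m: "n = Suc (Suc m)" using assms by (metis add_2_eq_Suc le_Suc_ex)
  define D0 where "D0 = Dsk n 0 0 0"
  define D1 where "D1 = Dsk n 1 0 0"
  define D2 where "D2 = Dsk n 1 1 0"
  define D3 where "D3 = Dsk n 1 1 1"
  have fin: "finite D0" "finite D1" "finite D2" "finite D3"
    unfolding D0_def D1_def D2_def D3_def by (rule Dsk_finite)+
  have in12: "(1,2) \<in> D0" "(1,2) \<in> D1" "(1,2) \<in> D2" "(1,2) \<in> D3"
    unfolding D0_def D1_def D2_def D3_def using assms by (auto simp: Dsk_def)
  then have ne: "D0 \<noteq> {}" "D1 \<noteq> {}" "D2 \<noteq> {}" "D3 \<noteq> {}" by auto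
  have M0: "{c. isMin D0 c} = {(1,1)}" unfolding D0_def by (subst Dsk_min) (use assms in auto)
  have M1: "{c. isMin D1 c} = {(1,2),(2,1)}" unfolding D1_def by (subst Dsk_min) (use assms in auto)
  have M2: "{c. isMin D2 c} = {(1,2),(3,1)}" unfolding D2_def by (subst Dsk_min) (use assms in auto)
  have M3: "{c. isMin D3 c} = {(1,2)}" unfolding D3_def by (subst Dsk_min) (use assms in auto)
  have r0: "D0 - {(1,1)} = D1" unfolding D0_def D1_def by (auto simp: Dsk_def)
  have r1a: "D1 - {(1,2)} = Dsk n 2 0 0" unfolding D1_def by (auto simp: Dsk_def)
  have r1b: "D1 - {(2,1)} = D2" unfolding D1_def D2_def by (auto simp: Dsk_def)
  have r2a: "D2 - {(1,2)} = Dsk n 2 1 0" unfolding D2_def by (auto simp: Dsk_def)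
  have r2b: "D2 - {(3,1)} = D3" unfolding D2_def D3_def by (auto simp: Dsk_def)
  have r3: "D3 - {(1,2)} = Dsk n 2 1 1" unfolding D3_def by (auto simp: Dsk_def)
  have V3: "\<And>T. T \<in> SYTon D3 \<Longrightarrow> T (1,2) = 1"
  proof -
    fix T assume T: "T \<in> SYTon D3"
    obtain c where c: "isMin D3 c" "(c = (1,2) \<and> T (1,2) = 1) \<or> (c \<noteq> (1,2) \<and> (\<exists>T'\<in>SYTon (D3 - {c}). T (1,2) = Suc (T' (1,2))))"
      using Vstep[OF fin(4) ne(4) in12(4) T] by blast
    have "c = (1,2)" using c(1) M3 by blast
    then show "T (1,2) = 1" using c(2) by blast
  qed
  have V2: "\<And>T. T \<in> SYTon D2 \<Longrightarrow> T (1,2) \<in> {1,2}"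
  proof -
    fix T assume T: "T \<in> SYTon D2"
    obtain c where c: "isMin D2 c" "(c = (1,2) \<and> T (1,2) = 1) \<or> (c \<noteq> (1,2) \<and> (\<exists>T'\<in>SYTon (D2 - {c}). T (1,2) = Suc (T' (1,2))))"
      using Vstep[OF fin(3) ne(3) in12(3) T] by blast
    have cc: "c = (1,2) \<or> c = (3,1)" using c(1) M2 by blast
    show "T (1,2) \<in> {1,2}"
    proof (cases "c = (1,2)")
      case True then show ?thesis using c(2) by simp
    next
      case False
      then have c31: "c = (3,1)" using cc by blast
      obtain T' where T': "T' \<in> SYTon D3" "T (1,2) = Suc (T' (1,2))" using c(2) False unfolding c31 r2b by blast
      then show ?thesis using V3[OF T'(1)] by simp
    qed
  qed
  have V1: "\<And>T. T \<in> SYTon D1 \<Longrightarrow> T (1,2) \<in> {1,2,3}"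
  proof -
    fix T assume T: "T \<in> SYTon D1"
    obtain c where c: "isMin D1 c" "(c = (1,2) \<and> T (1,2) = 1) \<or> (c \<noteq> (1,2) \<and> (\<exists>T'\<in>SYTon (D1 - {c}). T (1,2) = Suc (T' (1,2))))"
      using Vstep[OF fin(2) ne(2) in12(2) T] by blast
    have cc: "c = (1,2) \<or> c = (2,1)" using c(1) M1 by blast
    show "T (1,2) \<in> {1,2,3}"
    proof (cases "c = (1,2)")
      case True then show ?thesis using c(2) by simp
    next
      case False
      then have c21: "c = (2,1)" using cc by blast
      obtain T' where T': "T' \<in> SYTon D2" "T (1,2) = Suc (T' (1,2))" using c(2) False unfolding c21 r1b by blast
      then show ?thesis using V2[OF T'(1)] by auto
    qed
  qed
  have V0: "\<And>T. T \<in> SYTon D0 \<Longrightarrow> T (1,2) \<in> {2,3,4}"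
  proof -
    fix T assume T: "T \<in> SYTon D0"
    obtain c where c: "isMin D0 c" "(c = (1,2) \<and> T (1,2) = 1) \<or> (c \<noteq> (1,2) \<and> (\<exists>T'\<in>SYTon (D0 - {c}). T (1,2) = Suc (T' (1,2))))"
      using Vstep[OF fin(1) ne(1) in12(1) T] by blast
    have c11: "c = (1,1)" using c(1) M0 by blast
    obtain T' where T': "T' \<in> SYTon D1" "T (1,2) = Suc (T' (1,2))" using c(2) unfolding c11 r0 by auto
    then show "T (1,2) \<in> {2,3,4}" using V1[OF T'(1)] by auto
  qed
  have S: "SYT3 n = SYTon D0" unfolding SYT3_eq D0_def cells_Dsk ..
  have P1: "\<forall>T \<in> SYT3 n. T (1, 2) \<in> {2, 3, 4}" using V0 S by blast
  let ?G = "\<lambda>D. (\<Sum>T\<in>SYTon D. x ^ T (1,2))"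
  have G3: "?G D3 = x * real (card (SYTon (Dsk n 2 1 1)))"
    unfolding Gstep[OF fin(4) ne(4) in12(4)] M3 using r3 by simp
  have G2: "?G D2 = x * real (card (SYTon (Dsk n 2 1 0))) + x * ?G D3"
    unfolding Gstep[OF fin(3) ne(3) in12(3)] M2 using r2a r2b by simp
  have G1: "?G D1 = x * real (card (SYTon (Dsk n 2 0 0))) + x * ?G D2"
    unfolding Gstep[OF fin(2) ne(2) in12(2)] M1 using r1a r1b by simp
  have G0: "?G D0 = x * ?G D1"
    unfolding Gstep[OF fin(1) ne(1) in12(1)] M0 using r0 by simp
  have C0: "real (card (SYTon D0)) = Nf n n n" unfolding D0_def using count[of 0 0 0 n] by simp
  have C1: "real (card (SYTon (Dsk n 2 0 0))) = Nf n n (n-2)" using count[of 0 0 2 n] assms by simp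
  have C2: "real (card (SYTon (Dsk n 2 1 0))) = Nf n (n-1) (n-2)" using count[of 0 1 2 n] assms by simp
  have C3: "real (card (SYTon (Dsk n 2 1 1))) = Nf (n-1) (n-1) (n-2)" using count[of 1 1 2 n] assms by simp
  have Npos: "Nf n n n > 0" by (rule Nf_pos) auto
  have fS: "finite (SYTon D0)" by (rule SYTon_finite[OF fin(1)])
  have neS: "SYTon D0 \<noteq> {}" using C0 Npos by auto
  have E: "measure_pmf.expectation (pmf_of_set (SYT3 n)) (\<lambda>T. x ^ T (1, 2))
      = (x^2 * Nf n n (n-2) + x^3 * Nf n (n-1) (n-2) + x^4 * Nf (n-1) (n-1) (n-2)) / Nf n n n"
    unfolding S integral_pmf_of_set[OF neS fS] C0[symmetric]
    unfolding G0 G1 G2 G3 C1 C2 C3 by (simp add: algebra_simps power2_eq_square power3_eq_cube power4_eq_xxxx)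
  have A1: "3 * real m + 5 \<noteq> 0" by linarith
  have A2: "3 * (3 * real m + 5) * (3 * real m + 4) \<noteq> 0"
  proof -
    have "3 * (3 * real m + 5) * (3 * real m + 4) > 0" by (intro mult_pos_pos) auto
    then show ?thesis by simp
  qed
  have m1: "n - 1 = Suc m" "n - 2 = m" using m by auto
  have R1': "Nf n n (n-2) = 2 * (real m + 1) / (3 * real m + 5) * Nf n n n"
    using solve[OF A1 R1[of m]] m m1 by simp
  have R2': "Nf n (n-1) (n-2) = 8 * (real m + 1) * (real m + 3) / (3 * (3 * real m + 5) * (3 * real m + 4)) * Nf n n n"
    using solve[OF A2 R2[of m]] m m1 by simp
  have R3': "Nf (n-1) (n-1) (n-2) = (real m + 3) * (real m + 4) / (3 * (3 * real m + 5) * (3 * real m + 4)) * Nf n n n"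
    using solve[OF A2 R3[of m]] m m1 by simp
  have rn: "real n = real m + 2" using m by simp
  have P2: "measure_pmf.expectation (pmf_of_set (SYT3 n)) (\<lambda>T. x ^ T (1, 2))
      = 2 * (real n - 1) / (3 * real n - 1) * x ^ 2
        + 8 * (real n - 1) * (real n + 1) / (3 * (3 * real n - 1) * (3 * real n - 2)) * x ^ 3
        + (real n + 1) * (real n + 2) / (3 * (3 * real n - 1) * (3 * real n - 2)) * x ^ 4"
  proof -
    have a: "real n - 1 = real m + 1" "3 * real n - 1 = 3 * real m + 5" "real n + 1 = real m + 3"
      "3 * real n - 2 = 3 * real m + 4" "real n + 2 = real m + 4" using rn by simp_all
    show ?thesis unfolding E R1' R2' R3' a
      by (rule gsum) (use Npos in simp)
  qed
  show ?thesis using P1 P2 by blast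
qed

end
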